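(* For integers $a_1,a_2\ge1$, \[ G(a_1,a_2,0)=G(a_1-1,a_2,0)+G(a_1,a_2-1,0)+(-1)^{a_1+a_2}. \]
   Context: For integers $a_1,a_2,s$ with $a=a_1+a_2$, $G(a_1,a_2,s)=\sum_m N_m$, the sum over integers $m$ such that $a_1-m,\ a_2-(s-m),\ m,\ s-m$ are all nonnegative (an empty sum is $0$), where $N_m$ is the number of permutations $\pi$ of $[a]$ that are decreasing within each of four consecutive blocks of positions of lengths $a_1-m,\ a_2-(s-m),\ m,\ s-m$ (in this order; arbitrary between blocks), and have no fixed point ($\pi_i=i$) in the first two blocks. (For $s=0$ this is the number of permutations of $[a]$ decreasing on positions $1,\dots,a_1$ and on positions $a_1+1,\dots,a$ with no fixed point.) *)

theory Defs
  imports "HOL-Combinatorics.Permutations"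
begin

definition decr_on :: "(nat \<Rightarrow> nat) \<Rightarrow> nat set \<Rightarrow> bool" where
  "decr_on p B = (\<forall>i\<in>B. \<forall>j\<in>B. i < j \<longrightarrow> p j < p i)"

definition Nblocks :: "nat \<Rightarrow> nat \<Rightarrow> nat \<Rightarrow> nat \<Rightarrow> nat" where
  "Nblocks l1 l2 l3 l4 = card {p. p permutes {1..l1+l2+l3+l4}
      \<and> decr_on p {1..l1}
      \<and> decr_on p {l1+1..l1+l2}
      \<and> decr_on p {l1+l2+1..l1+l2+l3}
      \<and> decr_on p {l1+l2+l3+1..l1+l2+l3+l4}
      \<and> (\<forall>i\<in>{1..l1+l2}. p i \<noteq> i)}"

definition G :: "int \<Rightarrow> int \<Rightarrow> int \<Rightarrow> int" where
  "G a1 a2 s = (\<Sum>m\<in>{m::int. 0 \<le> a1 - m \<and> 0 \<le> a2 - (s - m) \<and> 0 \<le> m \<and> 0 \<le> s - m}.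
      int (Nblocks (nat (a1 - m)) (nat (a2 - (s - m))) (nat m) (nat (s - m))))"

end

theory Submission
  imports Defs
begin


definition cnt :: "nat set \<Rightarrow> nat \<Rightarrow> nat" where
  "cnt U v = card {u\<in>U. v \<le> u}"

definition goodset :: "int \<Rightarrow> nat set \<Rightarrow> bool" where
  "goodset d U = (\<forall>v\<in>U. d + int (cnt U v) \<noteq> int v)"

definition FF :: "nat \<Rightarrow> nat \<Rightarrow> int \<Rightarrow> nat" where
  "FF n m d = card {U. U \<subseteq> {1..n} \<and> card U = m \<and> goodset d U}"

lemma card_split_insert:
  assumes "finite B" "x \<notin> B"
  shows "card {U. U \<subseteq> insert x B \<and> P U} = card {U. U \<subseteq> B \<and> P U} + card {Y. Y \<subseteq> B \<and> P (insert x Y)}"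
proof -
  have eq: "{U. U \<subseteq> insert x B \<and> P U} = {U. U \<subseteq> B \<and> P U} \<union> insert x ` {Y. Y \<subseteq> B \<and> P (insert x Y)}"
  proof (rule set_eqI, rule iffI)
    fix U assume "U \<in> {U. U \<subseteq> insert x B \<and> P U}"
    then have U: "U \<subseteq> insert x B" "P U" by auto
    show "U \<in> {U. U \<subseteq> B \<and> P U} \<union> insert x ` {Y. Y \<subseteq> B \<and> P (insert x Y)}"
    proof (cases "x \<in> U")
      case True
      then have "U = insert x (U - {x})" by auto
      moreover have "U - {x} \<subseteq> B" using U by auto
      ultimately show ?thesis using U by (auto intro!: image_eqI[where x="U - {x}"])
    next
      case False then show ?thesis using U by auto
    qed
  qed (use assms in auto)
  have fin1: "finite {U. U \<subseteq> B \<and> P U}" using assms by auto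
  have fin2: "finite {Y. Y \<subseteq> B \<and> P (insert x Y)}" using assms by auto
  have inj: "inj_on (insert x) {Y. Y \<subseteq> B \<and> P (insert x Y)}"
    using assms(2) by (auto simp: inj_on_def)
  have disj: "{U. U \<subseteq> B \<and> P U} \<inter> insert x ` {Y. Y \<subseteq> B \<and> P (insert x Y)} = {}"
    using assms(2) by auto
  show ?thesis unfolding eq
    by (subst card_Un_disjoint) (use fin1 fin2 disj inj in \<open>auto simp: card_image\<close>)
qed

lemma cnt_shift:
  "cnt ((\<lambda>v. v + b) ` U) (v + b) = cnt U v"
proof -
  have "{u\<in>(\<lambda>v. v + b) ` U. v + b \<le> u} = (\<lambda>v. v + b) ` {u\<in>U. v \<le> u}" by auto
  then show ?thesis unfolding cnt_def by (simp add: card_image inj_on_def)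
qed

lemma goodset_shift:
  "goodset d ((\<lambda>v. v + b) ` U) \<longleftrightarrow> goodset (d - int b) U"
  unfolding goodset_def by (auto simp: cnt_shift)

lemma FF_shift:
  "card {Y. Y \<subseteq> {b+1..b+n} \<and> card Y = m \<and> goodset d Y} = FF n m (d - int b)"
proof -
  let ?f = "\<lambda>v::nat. v + b"
  have eq: "{Y. Y \<subseteq> {b+1..b+n} \<and> card Y = m \<and> goodset d Y}
      = image ?f ` {U. U \<subseteq> {1..n} \<and> card U = m \<and> goodset (d - int b) U}"
  proof (rule set_eqI, rule iffI)
    fix Y assume Y: "Y \<in> {Y. Y \<subseteq> {b+1..b+n} \<and> card Y = m \<and> goodset d Y}"
    define U where "U = (\<lambda>v. v - b) ` Y"
    have YU: "Y = ?f ` U" unfolding U_def using Y by (force simp: image_image)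
    have "U \<subseteq> {1..n}" unfolding U_def using Y by force
    moreover have "card U = m" using Y YU by (simp add: card_image inj_on_def)
    moreover have "goodset (d - int b) U" using Y YU goodset_shift by auto
    ultimately show "Y \<in> image ?f ` {U. U \<subseteq> {1..n} \<and> card U = m \<and> goodset (d - int b) U}"
      using YU by blast
  next
    fix Y assume "Y \<in> image ?f ` {U. U \<subseteq> {1..n} \<and> card U = m \<and> goodset (d - int b) U}"
    then obtain U where U: "U \<subseteq> {1..n}" "card U = m" "goodset (d - int b) U" and YU: "Y = ?f ` U"
      by auto
    show "Y \<in> {Y. Y \<subseteq> {b+1..b+n} \<and> card Y = m \<and> goodset d Y}"
      using U YU goodset_shift by (auto simp: card_image inj_on_def)
  qed
  have inj: "inj_on (image ?f) {U. U \<subseteq> {1..n} \<and> card U = m \<and> goodset (d - int b) U}"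
    by (auto simp: inj_on_def inj_image_eq_iff)
  show ?thesis unfolding eq FF_def by (rule card_image[OF inj])
qed

lemma cnt_insert_big:
  assumes "finite Y" "\<forall>y\<in>Y. y < x" 
  shows "cnt (insert x Y) x = 1" "v \<in> Y \<Longrightarrow> cnt (insert x Y) v = Suc (cnt Y v)"
proof -
  have "{u\<in>insert x Y. x \<le> u} = {x}" using assms by auto
  then show "cnt (insert x Y) x = 1" unfolding cnt_def by simp
  assume v: "v \<in> Y"
  have "{u\<in>insert x Y. v \<le> u} = insert x {u\<in>Y. v \<le> u}" using assms v by auto
  moreover have "x \<notin> {u\<in>Y. v \<le> u}" using assms by auto
  ultimately show "cnt (insert x Y) v = Suc (cnt Y v)" unfolding cnt_def using assms by simp
qed

lemma cnt_insert_small: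
  assumes "finite Y" "\<forall>y\<in>Y. x < y" 
  shows "cnt (insert x Y) x = Suc (card Y)" "v \<in> Y \<Longrightarrow> cnt (insert x Y) v = cnt Y v"
proof -
  have "{u\<in>insert x Y. x \<le> u} = insert x Y" using assms by auto
  moreover have "x \<notin> Y" using assms by auto
  ultimately show "cnt (insert x Y) x = Suc (card Y)" unfolding cnt_def using assms by simp
  assume v: "v \<in> Y"
  have "{u\<in>insert x Y. v \<le> u} = {u\<in>Y. v \<le> u}" using assms v by auto
  then show "cnt (insert x Y) v = cnt Y v" unfolding cnt_def by simp
qed

lemma FF_zero: "FF n 0 d = 1"
proof -
  have "{U. U \<subseteq> {1..n} \<and> card U = 0 \<and> goodset d U} = {{}}"
    by (auto simp: goodset_def) (metis card_0_eq empty_iff finite_atLeastAtMost finite_subset)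
  then show ?thesis unfolding FF_def by simp
qed

lemma FF_large:
  "FF (Suc n) m d = FF n m d + (if m \<ge> 1 \<and> d \<noteq> int n then FF n (m - 1) (d + 1) else 0)"
proof -
  have ins: "{1..Suc n} = insert (Suc n) {1..n}" by auto
  have "FF (Suc n) m d = FF n m d + card {Y. Y \<subseteq> {1..n} \<and> (card (insert (Suc n) Y) = m \<and> goodset d (insert (Suc n) Y))}"
    unfolding FF_def ins by (rule card_split_insert) auto
  also have "{Y. Y \<subseteq> {1..n} \<and> (card (insert (Suc n) Y) = m \<and> goodset d (insert (Suc n) Y))}
     = (if m \<ge> 1 \<and> d \<noteq> int n then {Y. Y \<subseteq> {1..n} \<and> card Y = m - 1 \<and> goodset (d + 1) Y} else {})"
  proof -
    { fix Y assume Y: "Y \<subseteq> {1..n}"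
      have fY: "finite Y" using Y finite_subset by blast
      have lt: "\<forall>y\<in>Y. y < Suc n" using Y by auto
      have nin: "Suc n \<notin> Y" using Y by auto
      have c: "card (insert (Suc n) Y) = Suc (card Y)" using fY nin by simp
      have g: "goodset d (insert (Suc n) Y) \<longleftrightarrow> d \<noteq> int n \<and> goodset (d + 1) Y"
        unfolding goodset_def using cnt_insert_big[OF fY lt] by auto
      have "(card (insert (Suc n) Y) = m \<and> goodset d (insert (Suc n) Y)) \<longleftrightarrow>
         (m \<ge> 1 \<and> d \<noteq> int n \<and> card Y = m - 1 \<and> goodset (d + 1) Y)"
        using c g by auto }
    then show ?thesis by auto
  qed
  finally show ?thesis unfolding FF_def by auto
qed

lemma FF_small:
  "FF (Suc n) m d = FF n m (d - 1) + (if m \<ge> 1 \<and> d + int m \<noteq> 1 then FF n (m - 1) (d - 1) else 0)"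
proof -
  have ins: "{1..Suc n} = insert 1 {1+1..1+n}" by auto
  have "FF (Suc n) m d = card {U. U \<subseteq> {1+1..1+n} \<and> card U = m \<and> goodset d U}
      + card {Y. Y \<subseteq> {1+1..1+n} \<and> (card (insert 1 Y) = m \<and> goodset d (insert 1 Y))}"
    unfolding FF_def ins by (rule card_split_insert) auto
  also have "card {U. U \<subseteq> {1+1..1+n} \<and> card U = m \<and> goodset d U} = FF n m (d - 1)"
    using FF_shift[of 1 n m d] by simp
  also have "{Y. Y \<subseteq> {1+1..1+n} \<and> (card (insert 1 Y) = m \<and> goodset d (insert 1 Y))}
     = (if m \<ge> 1 \<and> d + int m \<noteq> 1 then {Y. Y \<subseteq> {1+1..1+n} \<and> card Y = m - 1 \<and> goodset d Y} else {})"
  proof -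
    { fix Y assume Y: "Y \<subseteq> {1+1..1+n}"
      have fY: "finite Y" using Y finite_subset by blast
      have lt: "\<forall>y\<in>Y. 1 < y" using Y by auto
      have nin: "1 \<notin> Y" using Y by auto
      have c: "card (insert 1 Y) = Suc (card Y)" using fY nin by simp
      have g: "goodset d (insert 1 Y) \<longleftrightarrow> d + int (Suc (card Y)) \<noteq> 1 \<and> goodset d Y"
        unfolding goodset_def using cnt_insert_small[OF fY lt] by auto
      have "(card (insert 1 Y) = m \<and> goodset d (insert 1 Y)) \<longleftrightarrow>
         (m \<ge> 1 \<and> d + int m \<noteq> 1 \<and> card Y = m - 1 \<and> goodset d Y)"
        using c g by auto }
    then show ?thesis by auto
  qed
  also have "card (if m \<ge> 1 \<and> d + int m \<noteq> 1 then {Y. Y \<subseteq> {1+1..1+n} \<and> card Y = m - 1 \<and> goodset d Y} else {})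
     = (if m \<ge> 1 \<and> d + int m \<noteq> 1 then FF n (m - 1) (d - 1) else 0)"
    using FF_shift[of 1 n "m-1" d] by simp
  finally show ?thesis .
qed

lemma FF_d_step:
  assumes "0 \<le> d" "int m + d + 1 \<le> int n"
  shows "FF n m (d + 1) = FF n m d"
  using assms
proof (induction m arbitrary: n d)
  case 0
  then show ?case by (simp add: FF_zero)
next
  case (Suc m)
  then obtain n' where n: "n = Suc n'" by (cases n) auto
  have IH: "FF n' m (d + 1) = FF n' m d" using Suc.IH[of d n'] Suc.prems n by simp
  have a: "FF (Suc n') (Suc m) (d + 1) = FF n' (Suc m) d + FF n' m d"
    using FF_small[of n' "Suc m" "d+1"] Suc.prems by simp
  have b: "FF (Suc n') (Suc m) d = FF n' (Suc m) d + FF n' m (d + 1)"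
    using FF_large[of n' "Suc m" d] Suc.prems n by simp
  show ?case using a b IH n by simp
qed

definition psi :: "nat \<Rightarrow> nat \<Rightarrow> int" where
  "psi n k = (if k \<le> n then int (FF n (n - k) 0) else 0)"

definition phi :: "nat \<Rightarrow> nat \<Rightarrow> int" where
  "phi n k = (if k \<le> n then int (FF n (n - k) (int k)) else 0)"

lemma psi_pascal: "psi (Suc n) (Suc k) = psi n k + psi n (Suc k)"
proof (cases "k \<le> n")
  case True
  have L: "FF (Suc n) (n - k) 0 = FF n (n - k) 0 + (if n - k \<ge> 1 \<and> 0 \<noteq> int n then FF n (n - k - 1) 1 else 0)"
    using FF_large[of n "n-k" 0] by simp
  show ?thesis
  proof (cases "k = n")
    case True
    then show ?thesis using L by (simp add: psi_def)
  next
    case False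
    then have "k < n" using \<open>k \<le> n\<close> by simp
    have "FF n (n - k - 1) (0 + 1) = FF n (n - k - 1) 0" by (rule FF_d_step) (use \<open>k < n\<close> in auto)
    moreover have "Suc 0 \<le> n - k" "n - k - 1 = n - Suc k" "int n \<noteq> 0" using \<open>k < n\<close> by auto
    ultimately show ?thesis using L \<open>k < n\<close> by (simp add: psi_def)
  qed
next
  case False
  then show ?thesis by (simp add: psi_def)
qed

lemma phi_pascal: "phi (Suc n) (Suc k) = phi n k + phi n (Suc k)"
proof (cases "k \<le> n")
  case True
  have L: "FF (Suc n) (n - k) (int k + 1) = FF n (n - k) (int k) + (if n - k \<ge> 1 \<and> int k + 1 + int (n - k) \<noteq> 1 then FF n (n - k - 1) (int k) else 0)"
    using FF_small[of n "n-k" "int k + 1"] unfolding add_diff_cancel_right' .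
  show ?thesis
  proof (cases "k = n")
    case True
    then have "phi (Suc n) (Suc k) = int (FF (Suc n) (n - k) (int k + 1))" by (simp add: phi_def add.commute)
    also have "\<dots> = phi n k" using L True by (simp add: phi_def)
    finally show ?thesis using True by (simp add: phi_def)
  next
    case False
    then have "k < n" using \<open>k \<le> n\<close> by simp
    have "FF n (n - k - 1) (int k + 1) = FF n (n - k - 1) (int k)" by (rule FF_d_step) (use \<open>k < n\<close> in auto)
    moreover have "Suc 0 \<le> n - k" "n - k - 1 = n - Suc k" "int k + 1 + int (n - k) \<noteq> 1" using \<open>k < n\<close> by auto
    moreover have "phi (Suc n) (Suc k) = int (FF (Suc n) (n - k) (int k + 1))" using \<open>k < n\<close> by (simp add: phi_def add.commute)
    ultimately show ?thesis using L \<open>k < n\<close> by (simp add: phi_def add.commute)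
  qed
next
  case False
  then show ?thesis by (simp add: phi_def)
qed

lemma phi_psi: "phi n k = psi n k"
proof (induction n arbitrary: k)
  case 0
  then show ?case by (simp add: phi_def psi_def)
next
  case (Suc n)
  then show ?case
  proof (cases k)
    case 0
    then show ?thesis by (simp add: phi_def psi_def)
  next
    case (Suc k')
    then show ?thesis using phi_pascal psi_pascal Suc.IH by simp
  qed
qed

lemma FF_full: "FF n n 0 = (if even n then 1 else 0)"
proof -
  have sets: "{U. U \<subseteq> {1..n} \<and> card U = n} = {{1..n}}"
    using card_subset_eq[of "{1..n}"] by auto
  have "{U. U \<subseteq> {1..n} \<and> card U = n \<and> goodset 0 U} = (if goodset 0 {1..n} then {{1..n}} else {})"
    using sets by (auto simp del: atLeastAtMost_iff) (metis (mono_tags, lifting) mem_Collect_eq singletonD)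
  then have F: "FF n n 0 = (if goodset 0 {1..n} then 1 else 0)" unfolding FF_def by simp
  have c: "v \<in> {1..n} \<Longrightarrow> cnt {1..n} v = n + 1 - v" for v
  proof -
    assume "v \<in> {1..n}"
    then have "{u\<in>{1..n}. v \<le> u} = {v..n}" by auto
    then show ?thesis unfolding cnt_def by simp
  qed
  have "goodset 0 {1..n} \<longleftrightarrow> even n"
  proof
    assume g: "goodset 0 {1..n}"
    show "even n"
    proof (rule ccontr)
      assume "odd n"
      then obtain j where j: "n = 2 * j + 1" by (metis oddE)
      have "j + 1 \<in> {1..n}" using j by auto
      then have "0 + int (cnt {1..n} (j+1)) \<noteq> int (j+1)" using g unfolding goodset_def by blast
      then show False using c[OF \<open>j + 1 \<in> {1..n}\<close>] j by simp
    qed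
  next
    assume "even n"
    then show "goodset 0 {1..n}" unfolding goodset_def using c by auto presburger
  qed
  then show ?thesis using F by simp
qed

lemma psi_zero: "psi n 0 = (if even n then 1 else 0)"
  by (simp add: psi_def FF_full)



definition Sset :: "nat \<Rightarrow> nat \<Rightarrow> nat set set" where
  "Sset l1 l2 = {S. S \<subseteq> {1..l1+l2} \<and> card S = l1 \<and> goodset 0 S \<and> goodset (int l1) ({1..l1+l2} - S)}"

definition Aset :: "nat \<Rightarrow> nat \<Rightarrow> nat set set" where
  "Aset l1 k = {X. X \<subseteq> {1..l1} \<and> card X + k = l1 \<and> goodset (int k) X}"

definition Bset :: "nat \<Rightarrow> nat \<Rightarrow> nat \<Rightarrow> nat set set" where
  "Bset l1 l2 k = {Y. Y \<subseteq> {l1+1..l1+l2} \<and> card Y + k = l2 \<and> goodset (int l1) Y}"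

lemma card_Aset: "int (card (Aset l1 k)) = phi l1 k"
proof (cases "k \<le> l1")
  case True
  then have "Aset l1 k = {X. X \<subseteq> {1..l1} \<and> card X = l1 - k \<and> goodset (int k) X}"
    unfolding Aset_def by auto
  then show ?thesis using True by (simp add: phi_def FF_def)
next
  case False
  then have "Aset l1 k = {}" unfolding Aset_def by auto
  then show ?thesis using False by (simp add: phi_def)
qed

lemma card_Bset: "int (card (Bset l1 l2 k)) = psi l2 k"
proof (cases "k \<le> l2")
  case True
  then have "Bset l1 l2 k = {Y. Y \<subseteq> {l1+1..l1+l2} \<and> card Y = l2 - k \<and> goodset (int l1) Y}"
    unfolding Bset_def by auto
  then show ?thesis using True FF_shift[of l1 l2 "l2 - k" "int l1"] by (simp add: psi_def)
next
  case False
  then have "Bset l1 l2 k = {}" unfolding Bset_def by auto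
  then show ?thesis using False by (simp add: psi_def)
qed

lemma cnt_split_low:
  assumes "S \<subseteq> {1..l1+l2}" "v \<le> l1"
  shows "cnt S v = card (S \<inter> {l1+1..l1+l2}) + cnt (S \<inter> {1..l1}) v"
proof -
  have fS: "finite S" using assms finite_subset by blast
  have "{u\<in>S. v \<le> u} = (S \<inter> {l1+1..l1+l2}) \<union> {u\<in>S \<inter> {1..l1}. v \<le> u}"
    using assms by auto
  moreover have "(S \<inter> {l1+1..l1+l2}) \<inter> {u\<in>S \<inter> {1..l1}. v \<le> u} = {}" by auto
  ultimately show ?thesis unfolding cnt_def using fS by (simp add: card_Un_disjoint)
qed

lemma cnt_split_high:
  assumes "S \<subseteq> {1..l1+l2}" "l1 < v"
  shows "cnt S v = cnt (S \<inter> {l1+1..l1+l2}) v"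
proof -
  have "{u\<in>S. v \<le> u} = {u\<in>S \<inter> {l1+1..l1+l2}. v \<le> u}" using assms by auto
  then show ?thesis unfolding cnt_def by simp
qed

lemma cnt_le_card: "finite S \<Longrightarrow> cnt S v \<le> card S"
  unfolding cnt_def by (rule card_mono) auto

lemma cnt_pos: "finite S \<Longrightarrow> v \<in> S \<Longrightarrow> 1 \<le> cnt S v"
  unfolding cnt_def by (metis (mono_tags, lifting) One_nat_def Suc_leI card_gt_0_iff dual_order.refl
      empty_iff finite_subset mem_Collect_eq subsetI)

lemma goodS:
  assumes "S \<subseteq> {1..l1+l2}" "card S = l1"
  shows "goodset 0 S \<longleftrightarrow> goodset (int (card (S \<inter> {l1+1..l1+l2}))) (S \<inter> {1..l1})"
proof -
  have fS: "finite S" using assms finite_subset by blast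
  show ?thesis
  proof
    assume g: "goodset 0 S"
    show "goodset (int (card (S \<inter> {l1+1..l1+l2}))) (S \<inter> {1..l1})"
      unfolding goodset_def
    proof
      fix v assume v: "v \<in> S \<inter> {1..l1}"
      have "0 + int (cnt S v) \<noteq> int v" using g v unfolding goodset_def by auto
      then show "int (card (S \<inter> {l1 + 1..l1 + l2})) + int (cnt (S \<inter> {1..l1}) v) \<noteq> int v"
        using cnt_split_low[OF assms(1), of v] v by auto
    qed
  next
    assume g: "goodset (int (card (S \<inter> {l1+1..l1+l2}))) (S \<inter> {1..l1})"
    show "goodset 0 S" unfolding goodset_def
    proof
      fix v assume v: "v \<in> S"
      show "0 + int (cnt S v) \<noteq> int v"
      proof (cases "v \<le> l1")
        case True
        then have "v \<in> S \<inter> {1..l1}" using v assms by auto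
        then have "int (card (S \<inter> {l1+1..l1+l2})) + int (cnt (S \<inter> {1..l1}) v) \<noteq> int v"
          using g unfolding goodset_def by blast
        then show ?thesis using cnt_split_low[OF assms(1) True] by simp
      next
        case False
        then show ?thesis using cnt_le_card[OF fS, of v] assms by auto
      qed
    qed
  qed
qed

lemma goodT:
  assumes "T \<subseteq> {1..l1+l2}"
  shows "goodset (int l1) T \<longleftrightarrow> goodset (int l1) (T \<inter> {l1+1..l1+l2})"
proof -
  have fT: "finite T" using assms finite_subset by blast
  show ?thesis
  proof
    assume g: "goodset (int l1) T"
    show "goodset (int l1) (T \<inter> {l1+1..l1+l2})" unfolding goodset_def
    proof
      fix v assume v: "v \<in> T \<inter> {l1+1..l1+l2}"
      then show "int l1 + int (cnt (T \<inter> {l1 + 1..l1 + l2}) v) \<noteq> int v"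
        using g cnt_split_high[OF assms, of v] unfolding goodset_def by auto
    qed
  next
    assume g: "goodset (int l1) (T \<inter> {l1+1..l1+l2})"
    show "goodset (int l1) T" unfolding goodset_def
    proof
      fix v assume v: "v \<in> T"
      show "int l1 + int (cnt T v) \<noteq> int v"
      proof (cases "v \<le> l1")
        case True
        then show ?thesis using cnt_pos[OF fT v] by auto
      next
        case False
        then have "v \<in> T \<inter> {l1+1..l1+l2}" using v assms by auto
        then show ?thesis using g cnt_split_high[OF assms, of v] False unfolding goodset_def by auto
      qed
    qed
  qed
qed

lemma Sset_bij:
  assumes "l2 < N"
  shows "bij_betw (\<lambda>S. (S \<inter> {1..l1}, {l1+1..l1+l2} - S)) (Sset l1 l2)
           (\<Union>k\<in>{..<N}. Aset l1 k \<times> Bset l1 l2 k)"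
proof -
  let ?up = "{l1+1..l1+l2}"
  let ?f = "\<lambda>S. (S \<inter> {1..l1}, ?up - S)"
  have recon: "S = (S \<inter> {1..l1}) \<union> (?up - (?up - S))" if "S \<subseteq> {1..l1+l2}" for S
    using that by auto
  have inj: "inj_on ?f (Sset l1 l2)"
  proof (rule inj_onI)
    fix S S' assume "S \<in> Sset l1 l2" "S' \<in> Sset l1 l2" "?f S = ?f S'"
    then show "S = S'" using recon[of S] recon[of S'] unfolding Sset_def by auto
  qed
  have into: "?f S \<in> (\<Union>k\<in>{..<N}. Aset l1 k \<times> Bset l1 l2 k)" if S: "S \<in> Sset l1 l2" for S
  proof -
    have Ssub: "S \<subseteq> {1..l1+l2}" and cS: "card S = l1" and g0: "goodset 0 S"
      and gT: "goodset (int l1) ({1..l1+l2} - S)" using S unfolding Sset_def by auto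
    have fS: "finite S" using Ssub finite_subset by blast
    define k where "k = card (S \<inter> ?up)"
    have split: "S = (S \<inter> {1..l1}) \<union> (S \<inter> ?up)" using Ssub by auto
    have "card S = card (S \<inter> {1..l1}) + card (S \<inter> ?up)"
      by (subst split) (rule card_Un_disjoint, use fS in auto)
    then have cX: "card (S \<inter> {1..l1}) + k = l1" using cS k_def by simp
    have "card (?up - S) = card ?up - card (?up \<inter> S)" by (simp add: card_Diff_subset_Int Int_commute)
    moreover have "card (?up \<inter> S) \<le> card ?up" by (rule card_mono) auto
    moreover have "?up \<inter> S = S \<inter> ?up" by auto
    ultimately have cY: "card (?up - S) + k = l2" using k_def by simp
    have gX: "goodset (int k) (S \<inter> {1..l1})" using goodS[OF Ssub cS] g0 k_def by simp
    have "({1..l1+l2} - S) \<inter> ?up = ?up - S" by auto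
    then have gY: "goodset (int l1) (?up - S)" using goodT[of "{1..l1+l2} - S" l1 l2] gT by auto
    have "k \<le> l2" using cY by simp
    then have "k \<in> {..<N}" using assms by simp
    moreover have "?f S \<in> Aset l1 k \<times> Bset l1 l2 k"
      unfolding Aset_def Bset_def using cX cY gX gY by auto
    ultimately show ?thesis by blast
  qed
  have onto: "p \<in> ?f ` Sset l1 l2" if p: "p \<in> (\<Union>k\<in>{..<N}. Aset l1 k \<times> Bset l1 l2 k)" for p
  proof -
    obtain X Y k where pXY: "p = (X, Y)" and X: "X \<in> Aset l1 k" and Y: "Y \<in> Bset l1 l2 k"
      using p by auto
    have Xs: "X \<subseteq> {1..l1}" and cX: "card X + k = l1" and gX: "goodset (int k) X"
      using X unfolding Aset_def by auto
    have Ys: "Y \<subseteq> ?up" and cY: "card Y + k = l2" and gY: "goodset (int l1) Y"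
      using Y unfolding Bset_def by auto
    define S where "S = X \<union> (?up - Y)"
    have Ssub: "S \<subseteq> {1..l1+l2}" unfolding S_def using Xs by auto
    have SX: "S \<inter> {1..l1} = X" unfolding S_def using Xs by auto
    have SY: "?up - S = Y" unfolding S_def using Xs Ys by fastforce
    have Sup: "S \<inter> ?up = ?up - Y" unfolding S_def using Xs by auto
    have fX: "finite X" using Xs finite_subset by blast
    have cU: "card (?up - Y) = k" using cY Ys by (simp add: card_Diff_subset finite_subset)
    have "card S = card X + card (?up - Y)" unfolding S_def
      by (rule card_Un_disjoint) (use fX Xs in auto)
    then have cS: "card S = l1" using cX cU by simp
    have g0: "goodset 0 S" using goodS[OF Ssub cS] Sup cU SX gX by simp
    have "({1..l1+l2} - S) \<inter> ?up = ?up - S" by auto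
    then have gT: "goodset (int l1) ({1..l1+l2} - S)" using goodT[of "{1..l1+l2} - S" l1 l2] gY SY by auto
    have "S \<in> Sset l1 l2" unfolding Sset_def using Ssub cS g0 gT by auto
    moreover have "?f S = p" using SX SY pXY by simp
    ultimately show ?thesis by blast
  qed
  show ?thesis unfolding bij_betw_def using inj into onto by blast
qed

lemma card_Sset: "int (card (Sset l1 l2)) = (\<Sum>k<Suc l2. phi l1 k * psi l2 k)"
proof -
  have "card (Sset l1 l2) = card (\<Union>k\<in>{..<Suc l2}. Aset l1 k \<times> Bset l1 l2 k)"
    using bij_betw_same_card[OF Sset_bij[of l2 "Suc l2" l1]] by simp
  also have "\<dots> = (\<Sum>k<Suc l2. card (Aset l1 k \<times> Bset l1 l2 k))"
  proof (rule card_UN_disjoint)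
    show "finite {..<Suc l2}" by simp
    show "\<forall>i\<in>{..<Suc l2}. finite (Aset l1 i \<times> Bset l1 l2 i)"
      unfolding Aset_def Bset_def by auto
    show "\<forall>i\<in>{..<Suc l2}. \<forall>j\<in>{..<Suc l2}. i \<noteq> j \<longrightarrow> (Aset l1 i \<times> Bset l1 l2 i) \<inter> (Aset l1 j \<times> Bset l1 l2 j) = {}"
      unfolding Aset_def Bset_def by auto
  qed
  also have "\<dots> = (\<Sum>k<Suc l2. card (Aset l1 k) * card (Bset l1 l2 k))"
    by (simp add: card_cartesian_product)
  finally have "int (card (Sset l1 l2)) = (\<Sum>k<Suc l2. int (card (Aset l1 k)) * int (card (Bset l1 l2 k)))"
    by simp
  then show ?thesis by (simp add: card_Aset card_Bset)
qed

lemma psi_big: "n < k \<Longrightarrow> psi n k = 0"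
  by (simp add: psi_def)

lemma sum_ext:
  assumes "b < N"
  shows "(\<Sum>k<Suc b. psi a k * psi b k) = (\<Sum>k<N. psi a k * psi b k)"
proof -
  have "(\<Sum>k<N. psi a k * psi b k) = (\<Sum>k<Suc b. psi a k * psi b k) + (\<Sum>k\<in>{Suc b..<N}. psi a k * psi b k)"
    using assms by (metis (no_types, lifting) Suc_leI lessThan_atLeast0 sum.atLeastLessThan_concat zero_le)
  moreover have "(\<Sum>k\<in>{Suc b..<N}. psi a k * psi b k) = 0" by (rule sum.neutral) (auto simp: psi_big)
  ultimately show ?thesis by simp
qed

lemma telescope:
  assumes "a < N"
  shows "(\<Sum>k<Suc N. psi (Suc a) k * psi (Suc b) k) - (\<Sum>k<Suc N. psi a k * psi (Suc b) k)
       - (\<Sum>k<Suc N. psi (Suc a) k * psi b k)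
       = (psi (Suc a) 0 - psi a 0) * (psi (Suc b) 0 - psi b 0)"
proof -
  let ?p = "psi a" and ?q = "psi b"
  have e1: "(\<Sum>k<Suc N. psi (Suc a) k * psi (Suc b) k) = psi (Suc a) 0 * psi (Suc b) 0
      + (\<Sum>k<N. (?p k + ?p (Suc k)) * (?q k + ?q (Suc k)))"
    by (subst sum.lessThan_Suc_shift) (simp add: psi_pascal)
  have e2: "(\<Sum>k<Suc N. psi a k * psi (Suc b) k) = psi a 0 * psi (Suc b) 0
      + (\<Sum>k<N. ?p (Suc k) * (?q k + ?q (Suc k)))"
    by (subst sum.lessThan_Suc_shift) (simp add: psi_pascal)
  have e3: "(\<Sum>k<Suc N. psi (Suc a) k * psi b k) = psi (Suc a) 0 * psi b 0
      + (\<Sum>k<N. (?p k + ?p (Suc k)) * ?q (Suc k))"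
    by (subst sum.lessThan_Suc_shift) (simp add: psi_pascal)
  have "(\<Sum>k<N. (?p k + ?p (Suc k)) * (?q k + ?q (Suc k))) - (\<Sum>k<N. ?p (Suc k) * (?q k + ?q (Suc k)))
      - (\<Sum>k<N. (?p k + ?p (Suc k)) * ?q (Suc k))
      = (\<Sum>k<N. ?p k * ?q k - ?p (Suc k) * ?q (Suc k))"
    by (simp add: sum_subtractf[symmetric] algebra_simps)
  also have "\<dots> = - (\<Sum>k<N. ?p (Suc k) * ?q (Suc k) - ?p k * ?q k)"
    by (simp add: sum_negf[symmetric])
  also have "\<dots> = ?p 0 * ?q 0 - ?p N * ?q N"
    by (subst sum_lessThan_telescope) simp
  also have "\<dots> = ?p 0 * ?q 0" using assms psi_big by simp
  finally have T: "(\<Sum>k<N. (?p k + ?p (Suc k)) * (?q k + ?q (Suc k))) - (\<Sum>k<N. ?p (Suc k) * (?q k + ?q (Suc k)))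
      - (\<Sum>k<N. (?p k + ?p (Suc k)) * ?q (Suc k)) = ?p 0 * ?q 0" .
  show ?thesis unfolding e1 e2 e3 using T by (simp add: algebra_simps)
qed



lemma decr_cnt:
  assumes "finite X" "inj_on p X" "decr_on p X" "i \<in> X"
  shows "cnt (p ` X) (p i) = card {j\<in>X. j \<le> i}"
proof -
  have "{u\<in>p ` X. p i \<le> u} = p ` {j\<in>X. j \<le> i}"
  proof (rule set_eqI, rule iffI)
    fix u assume "u \<in> {u\<in>p ` X. p i \<le> u}"
    then obtain j where j: "j \<in> X" "u = p j" "p i \<le> p j" by auto
    have "j \<le> i"
    proof (rule ccontr)
      assume "\<not> j \<le> i"
      then have "p j < p i" using assms(3,4) j unfolding decr_on_def by auto
      then show False using j by simp
    qed
    then show "u \<in> p ` {j\<in>X. j \<le> i}" using j by auto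
  next
    fix u assume "u \<in> p ` {j\<in>X. j \<le> i}"
    then obtain j where j: "j \<in> X" "u = p j" "j \<le> i" by auto
    have "p i \<le> p j"
    proof (cases "j = i")
      case False
      then have "j < i" using j by simp
      then show ?thesis using assms(3,4) j unfolding decr_on_def by (simp add: less_imp_le)
    qed simp
    then show "u \<in> {u\<in>p ` X. p i \<le> u}" using j by auto
  qed
  moreover have "inj_on p {j\<in>X. j \<le> i}" using assms(2) by (rule inj_on_subset) auto
  ultimately show ?thesis unfolding cnt_def by (simp add: card_image)
qed

lemma cnt_anti: "finite S \<Longrightarrow> v \<le> w \<Longrightarrow> cnt S w \<le> cnt S v"
  unfolding cnt_def by (rule card_mono) auto

lemma cnt_strict:
  assumes "finite S" "v \<in> S" "v < w"
  shows "cnt S w < cnt S v"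
  unfolding cnt_def
proof (rule psubset_card_mono)
  show "finite {u \<in> S. v \<le> u}" using assms by simp
  have "v \<in> {u \<in> S. v \<le> u}" "v \<notin> {u \<in> S. w \<le> u}" using assms by auto
  moreover have "{u \<in> S. w \<le> u} \<subseteq> {u \<in> S. v \<le> u}" using assms by auto
  ultimately show "{u \<in> S. w \<le> u} \<subset> {u \<in> S. v \<le> u}" by blast
qed

lemma cnt_inj: "finite S \<Longrightarrow> inj_on (cnt S) S"
proof (rule inj_onI)
  fix v w assume "finite S" "v \<in> S" "w \<in> S" "cnt S v = cnt S w"
  then show "v = w" using cnt_strict[of S v w] cnt_strict[of S w v]
    by (metis less_irrefl linorder_neqE_nat)
qed

lemma cnt_bij:
  assumes "finite S"
  shows "bij_betw (cnt S) S {1..card S}"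
proof -
  have sub: "cnt S ` S \<subseteq> {1..card S}"
    using cnt_pos[OF assms] cnt_le_card[OF assms] by auto
  have "card (cnt S ` S) = card S" using card_image[OF cnt_inj[OF assms]] .
  then have "cnt S ` S = {1..card S}"
    using sub by (intro card_subset_eq) auto
  then show ?thesis unfolding bij_betw_def using cnt_inj[OF assms] by simp
qed

definition Pset :: "nat \<Rightarrow> nat \<Rightarrow> (nat \<Rightarrow> nat) set" where
  "Pset l1 l2 = {p. p permutes {1..l1+l2} \<and> decr_on p {1..l1} \<and> decr_on p {l1+1..l1+l2}
      \<and> (\<forall>i\<in>{1..l1+l2}. p i \<noteq> i)}"

lemma decr_on_empty: "decr_on p {}" unfolding decr_on_def by simp

lemma Nblocks_Pset: "Nblocks l1 l2 0 0 = card (Pset l1 l2)"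
  unfolding Nblocks_def Pset_def by (simp add: decr_on_empty)

lemma card_upto: "card {j\<in>{1..l}. j \<le> i} = i" if "i \<in> {1..l}" for l i :: nat
proof -
  have "{j\<in>{1..l}. j \<le> i} = {1..i}" using that by auto
  then show ?thesis by simp
qed

lemma card_upto2: "card {j\<in>{l1+1..l}. j \<le> i} = i - l1" if "i \<in> {l1+1..l}" for l l1 i :: nat
proof -
  have "{j\<in>{l1+1..l}. j \<le> i} = {l1+1..i}" using that by auto
  then show ?thesis by simp
qed

lemma Pset_bij: "bij_betw (\<lambda>p. p ` {1..l1}) (Pset l1 l2) (Sset l1 l2)"
proof -
  let ?A = "{1..l1}" and ?B = "{l1+1..l1+l2}" and ?U = "{1..l1+l2}"
  have AB: "?A \<union> ?B = ?U" by auto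
  have ABd: "?A \<inter> ?B = {}" by auto
  have facts: "p ` ?A \<subseteq> ?U \<and> p ` ?B = ?U - p ` ?A \<and> card (p ` ?A) = l1 \<and>
      (\<forall>i\<in>?A. cnt (p ` ?A) (p i) = i) \<and> (\<forall>i\<in>?B. cnt (p ` ?B) (p i) = i - l1)"
    if p: "p \<in> Pset l1 l2" for p
  proof -
    have perm: "p permutes ?U" and dA: "decr_on p ?A" and dB: "decr_on p ?B"
      using p unfolding Pset_def by auto
    have inj: "inj p" using permutes_inj[OF perm] .
    have img: "p ` ?U = ?U" using permutes_image[OF perm] .
    have "p ` ?A \<union> p ` ?B = ?U" using img AB by (metis image_Un)
    moreover have "p ` ?A \<inter> p ` ?B = {}" using inj ABd by (simp add: image_Int[symmetric])
    ultimately have B: "p ` ?B = ?U - p ` ?A" by auto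
    have "p ` ?A \<subseteq> ?U" using img by auto
    moreover have "card (p ` ?A) = l1" using inj by (simp add: card_image inj_on_subset)
    moreover have "\<forall>i\<in>?A. cnt (p ` ?A) (p i) = i"
      using decr_cnt[of ?A p] dA inj card_upto by (simp add: inj_on_subset)
    moreover have "\<forall>i\<in>?B. cnt (p ` ?B) (p i) = i - l1"
      using decr_cnt[of ?B p] dB inj card_upto2 by (simp add: inj_on_subset)
    ultimately show ?thesis using B by blast
  qed
  have into: "p ` ?A \<in> Sset l1 l2" if p: "p \<in> Pset l1 l2" for p
  proof -
    have nf: "\<forall>i\<in>?U. p i \<noteq> i" using p unfolding Pset_def by auto
    note F = facts[OF p]
    have g0: "goodset 0 (p ` ?A)" unfolding goodset_def
    proof
      fix v assume "v \<in> p ` ?A"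
      then obtain i where i: "i \<in> ?A" "v = p i" by auto
      have "i \<in> ?U" using i by auto
      then have "p i \<noteq> i" using nf by blast
      moreover have "cnt (p ` ?A) (p i) = i" using F i by blast
      ultimately show "0 + int (cnt (p ` ?A) v) \<noteq> int v" using i by simp
    qed
    have g1: "goodset (int l1) (p ` ?B)" unfolding goodset_def
    proof
      fix v assume "v \<in> p ` ?B"
      then obtain i where i: "i \<in> ?B" "v = p i" by auto
      then have "cnt (p ` ?B) v = i - l1" using F by auto
      moreover have "i \<in> ?U" using i by auto
      then have "p i \<noteq> i" using nf by blast
      moreover have "l1 < i" using i by auto
      ultimately show "int l1 + int (cnt (p ` ?B) v) \<noteq> int v" using i by simp
    qed
    show ?thesis unfolding Sset_def using F g0 g1 by auto
  qed
  have inj: "inj_on (\<lambda>p. p ` ?A) (Pset l1 l2)"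
  proof (rule inj_onI)
    fix p q assume p: "p \<in> Pset l1 l2" and q: "q \<in> Pset l1 l2" and e: "p ` ?A = q ` ?A"
    note Fp = facts[OF p] and Fq = facts[OF q]
    have fin: "finite (p ` ?A)" "finite (p ` ?B)" by auto
    have eB: "p ` ?B = q ` ?B" using Fp Fq e by simp
    show "p = q"
    proof
      fix x
      show "p x = q x"
      proof (cases "x \<in> ?A")
        case True
        have "cnt (p ` ?A) (p x) = cnt (p ` ?A) (q x)" using Fp Fq e True by simp
        moreover have "p x \<in> p ` ?A" "q x \<in> p ` ?A" using True e by auto
        ultimately show ?thesis by (rule inj_onD[OF cnt_inj[OF fin(1)]])
      next
        case nA: False
        show ?thesis
        proof (cases "x \<in> ?B")
          case True
          have c1: "cnt (p ` ?B) (p x) = x - l1" using Fp True by blast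
          have c2: "cnt (q ` ?B) (q x) = x - l1" using Fq True by blast
          have "cnt (p ` ?B) (p x) = cnt (p ` ?B) (q x)" using c1 c2 eB by simp
          moreover have "p x \<in> p ` ?B" "q x \<in> p ` ?B" using True eB by auto
          ultimately show ?thesis by (rule inj_onD[OF cnt_inj[OF fin(2)]])
        next
          case False
          then have "x \<notin> ?U" using nA AB by blast
          moreover have "p permutes ?U" "q permutes ?U" using p q unfolding Pset_def by auto
          ultimately show ?thesis using permutes_not_in by metis
        qed
      qed
    qed
  qed
  have onto: "S \<in> (\<lambda>p. p ` ?A) ` Pset l1 l2" if S: "S \<in> Sset l1 l2" for S
  proof -
    have Ssub: "S \<subseteq> ?U" and cS: "card S = l1" and g0: "goodset 0 S"
      and gT: "goodset (int l1) (?U - S)" using S unfolding Sset_def by auto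
    define T where "T = ?U - S"
    have fS: "finite S" using Ssub finite_subset by blast
    have fT: "finite T" unfolding T_def by simp
    have cT: "card T = l2" unfolding T_def using cS Ssub by (simp add: card_Diff_subset fS)
    define f where "f = cnt S"
    define g where "g = (\<lambda>v. l1 + cnt T v)"
    have bf: "bij_betw f S ?A" unfolding f_def using cnt_bij[OF fS] cS by simp
    have bg0: "bij_betw (cnt T) T {1..l2}" using cnt_bij[OF fT] cT by simp
    have bplus: "bij_betw (\<lambda>x. l1 + x) {1..l2} ?B"
      unfolding bij_betw_def inj_on_def
    proof (intro conjI ballI impI)
      show "(+) l1 ` {1..l2} = ?B"
      proof (rule set_eqI, rule iffI)
        fix x assume "x \<in> ?B" then show "x \<in> (+) l1 ` {1..l2}"
          by (intro image_eqI[where x="x - l1"]) auto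
      qed auto
    qed simp
    have bg: "bij_betw g T ?B" unfolding g_def
      using bij_betw_trans[OF bg0 bplus] by (simp add: comp_def)
    define p where "p = (\<lambda>i. if i \<in> ?A then the_inv_into S f i else if i \<in> ?B then the_inv_into T g i else i)"
    have pA: "bij_betw p ?A S"
      using bij_betw_the_inv_into[OF bf] by (rule bij_betw_cong[THEN iffD1, rotated]) (simp add: p_def)
    have pB: "bij_betw p ?B T"
      using bij_betw_the_inv_into[OF bg] by (rule bij_betw_cong[THEN iffD1, rotated]) (use ABd in \<open>auto simp: p_def\<close>)
    have "bij_betw p (?A \<union> ?B) (S \<union> T)" by (rule bij_betw_combine[OF pA pB]) (auto simp: T_def)
    moreover have "S \<union> T = ?U" using Ssub T_def by auto
    ultimately have bU: "bij_betw p ?U ?U" using AB by simp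
    have perm: "p permutes ?U"
      by (rule bij_imp_permutes[OF bU]) (use AB in \<open>auto simp: p_def\<close>)
    have fp: "f (p i) = i" if "i \<in> ?A" for i
      using f_the_inv_into_f_bij_betw[OF bf] that by (simp add: p_def)
    have gp: "g (p i) = i" if "i \<in> ?B" for i
    proof -
      have "i \<notin> ?A" using that by auto
      then show ?thesis using f_the_inv_into_f_bij_betw[OF bg] that by (simp add: p_def)
    qed
    have pAS: "p i \<in> S" if "i \<in> ?A" for i using pA that by (auto simp: bij_betw_def)
    have pBT: "p i \<in> T" if "i \<in> ?B" for i using pB that by (auto simp: bij_betw_def)
    have dA: "decr_on p ?A" unfolding decr_on_def
    proof (intro ballI impI)
      fix i j assume ij: "i \<in> ?A" "j \<in> ?A" "i < j"
      show "p j < p i"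
      proof (rule ccontr)
        assume "\<not> p j < p i"
        then have "f (p j) \<le> f (p i)" unfolding f_def using cnt_anti[OF fS] by simp
        then show False using fp ij by simp
      qed
    qed
    have dB: "decr_on p ?B" unfolding decr_on_def
    proof (intro ballI impI)
      fix i j assume ij: "i \<in> ?B" "j \<in> ?B" "i < j"
      show "p j < p i"
      proof (rule ccontr)
        assume "\<not> p j < p i"
        then have "g (p j) \<le> g (p i)" unfolding g_def using cnt_anti[OF fT] by simp
        then show False using gp ij by simp
      qed
    qed
    have nf: "\<forall>i\<in>?U. p i \<noteq> i"
    proof
      fix i assume i: "i \<in> ?U"
      show "p i \<noteq> i"
      proof (cases "i \<in> ?A")
        case True
        have "0 + int (cnt S (p i)) \<noteq> int (p i)" using g0 pAS[OF True] unfolding goodset_def by blast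
        then show ?thesis using fp[OF True] unfolding f_def by auto
      next
        case False
        then have iB: "i \<in> ?B" using i by auto
        have "int l1 + int (cnt T (p i)) \<noteq> int (p i)" using gT pBT[OF iB] unfolding goodset_def T_def by blast
        then show ?thesis using gp[OF iB] unfolding g_def by auto
      qed
    qed
    have "p \<in> Pset l1 l2" unfolding Pset_def using perm dA dB nf by auto
    moreover have "p ` ?A = S" using pA by (simp add: bij_betw_def)
    ultimately show ?thesis by blast
  qed
  show ?thesis unfolding bij_betw_def using inj into onto by blast
qed

lemma Nblocks_formula: "int (Nblocks l1 l2 0 0) = (\<Sum>k<Suc l2. psi l1 k * psi l2 k)"
  using Nblocks_Pset bij_betw_same_card[OF Pset_bij] card_Sset by (simp add: phi_psi)



lemma G_zero:
  assumes "0 \<le> a1" "0 \<le> a2"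
  shows "G a1 a2 0 = (\<Sum>k<Suc (nat a2). psi (nat a1) k * psi (nat a2) k)"
proof -
  have "{m::int. 0 \<le> a1 - m \<and> 0 \<le> a2 - (0 - m) \<and> 0 \<le> m \<and> 0 \<le> 0 - m} = {0}"
    using assms by auto
  then have "G a1 a2 0 = int (Nblocks (nat a1) (nat a2) 0 0)" unfolding G_def by simp
  then show ?thesis using Nblocks_formula by simp
qed

lemma psi_diff: "psi (Suc n) 0 - psi n 0 = (-1) ^ Suc n"
  by (simp add: psi_zero)

theorem mainTheorem14:
  fixes a1 a2 :: int
  assumes "a1 \<ge> 1" and "a2 \<ge> 1"
  shows "G a1 a2 0 = G (a1 - 1) a2 0 + G a1 (a2 - 1) 0 + (-1) ^ nat (a1 + a2)"
proof -
  define a where "a = nat (a1 - 1)"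
  define b where "b = nat (a2 - 1)"
  have na1: "nat a1 = Suc a" and na2: "nat a2 = Suc b" using assms a_def b_def by auto
  have na1': "nat (a1 - 1) = a" and na2': "nat (a2 - 1) = b" using a_def b_def by auto
  define N where "N = a + b + 2"
  have e1: "G a1 a2 0 = (\<Sum>k<Suc N. psi (Suc a) k * psi (Suc b) k)"
    using G_zero[of a1 a2] assms na1 na2 sum_ext[of "Suc b" "Suc N" "Suc a"] N_def by simp
  have e2: "G (a1 - 1) a2 0 = (\<Sum>k<Suc N. psi a k * psi (Suc b) k)"
    using G_zero[of "a1 - 1" a2] assms na1' na2 sum_ext[of "Suc b" "Suc N" a] N_def by simp
  have e3: "G a1 (a2 - 1) 0 = (\<Sum>k<Suc N. psi (Suc a) k * psi b k)"
    using G_zero[of a1 "a2 - 1"] assms na1 na2' sum_ext[of b "Suc N" "Suc a"] N_def by simp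
  have T: "G a1 a2 0 - G (a1 - 1) a2 0 - G a1 (a2 - 1) 0 = (-1) ^ Suc a * (-1) ^ Suc b"
    unfolding e1 e2 e3 using telescope[of a N b] N_def by (simp add: psi_diff)
  have "nat (a1 + a2) = Suc a + Suc b" using na1 na2 assms by simp
  then have "(-1::int) ^ nat (a1 + a2) = (-1) ^ Suc a * (-1) ^ Suc b" by (simp add: power_add)
  then show ?thesis using T by simp
qed

end
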